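(* Let $r\ge3$ and $n\ge1$ be integers and put $q_k=\frac{1+r^k(r-2)}{r-1}$ for $k\in\mathbb Z_{\ge0}$. If $B\subseteq\mathbb Z_{q_n}^n$ is an independent set in $C_{q_{n-1},q_n}^{\boxtimes n}$ with $|B|=q_n$, then for every coordinate $i\in\{1,\dots,n\}$ and every symbol $s\in\mathbb Z_{q_n}$ there is exactly one $b\in B$ with $b_i=s$.
   Context: For positive integers $q,d$ with $q\ge 2d$, the circular graph $C_{d,q}$ has vertex set $\mathbb Z_q$, two distinct vertices $x,y$ being adjacent iff $\min\{|x-y|,q-|x-y|\}<d$ (viewing $x,y$ as integers in $\{0,\dots,q-1\}$). For a graph $G=(V,E)$, $G^{\boxtimes n}$ has vertex set $V^n$, distinct $(u_i)$, $(v_i)$ adjacent iff for every $i$ either $u_i=v_i$ or $u_iv_i\in E$. An independent set is a set of pairwise non-adjacent vertices. *)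

theory Defs
  imports Main
begin

text \<open>Vertices of the circular graph C_{d,q} are 0..q-1 (representing Z_q).\<close>

definition circ_dist :: "nat \<Rightarrow> nat \<Rightarrow> nat \<Rightarrow> nat" where
  "circ_dist q x y = (let a = (if x \<le> y then y - x else x - y) in min a (q - a))"

definition circ_adj :: "nat \<Rightarrow> nat \<Rightarrow> nat \<Rightarrow> nat \<Rightarrow> bool" where
  "circ_adj d q x y \<longleftrightarrow> x < q \<and> y < q \<and> x \<noteq> y \<and> circ_dist q x y < d"

definition strong_pow_verts :: "nat \<Rightarrow> nat \<Rightarrow> nat list set" where
  "strong_pow_verts q n = {u. length u = n \<and> (\<forall>i<n. u ! i < q)}"

definition strong_pow_adj :: "nat \<Rightarrow> nat \<Rightarrow> nat \<Rightarrow> nat list \<Rightarrow> nat list \<Rightarrow> bool" where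
  "strong_pow_adj d q n u v \<longleftrightarrow>
     u \<in> strong_pow_verts q n \<and> v \<in> strong_pow_verts q n \<and> u \<noteq> v \<and>
     (\<forall>i<n. u ! i = v ! i \<or> circ_adj d q (u ! i) (v ! i))"

definition indep_strong_pow :: "nat \<Rightarrow> nat \<Rightarrow> nat \<Rightarrow> nat list set \<Rightarrow> bool" where
  "indep_strong_pow d q n B \<longleftrightarrow>
     B \<subseteq> strong_pow_verts q n \<and> (\<forall>u\<in>B. \<forall>v\<in>B. \<not> strong_pow_adj d q n u v)"

text \<open>q_k = (1 + r^k (r-2)) / (r-1); the division is exact since r^k = 1 mod (r-1).\<close>
definition qseq :: "nat \<Rightarrow> nat \<Rightarrow> nat" where
  "qseq r k = (1 + r ^ k * (r - 2)) div (r - 1)"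

end

theory Submission imports Defs "HOL-Number_Theory.Cong" begin

definition indep_on :: "nat \<Rightarrow> nat \<Rightarrow> nat set \<Rightarrow> nat list set \<Rightarrow> bool" where
  "indep_on d q I A \<longleftrightarrow> (\<forall>u\<in>A. \<forall>v\<in>A. u \<noteq> v \<longrightarrow>
     (\<exists>j\<in>I. u ! j \<noteq> v ! j \<and> \<not> circ_adj d q (u ! j) (v ! j)))"

definition cnt :: "nat list set \<Rightarrow> nat \<Rightarrow> nat \<Rightarrow> nat" where
  "cnt A i y = card {a\<in>A. a ! i = y}"

definition win :: "nat list set \<Rightarrow> nat \<Rightarrow> nat \<Rightarrow> nat \<Rightarrow> nat \<Rightarrow> nat list set" where
  "win A i d q x = {a\<in>A. \<exists>t<d. a ! i = (x + t) mod q}"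

lemma mod_inj_small:
  assumes "d \<le> q" "t < d" "t' < d" "(x + t) mod q = (x + t') mod (q::nat)"
  shows "t = t'"
proof -
  have "[x + t = x + t'] (mod q)" using assms(4) by (simp add: cong_def)
  hence "[t = t'] (mod q)" by (simp add: cong_add_lcancel_nat)
  thus ?thesis using assms by (simp add: cong_def)
qed

lemma card_win:
  assumes "finite A" "d \<le> q"
  shows "card (win A i d q x) = (\<Sum>t<d. cnt A i ((x + t) mod q))"
proof -
  have eq: "win A i d q x = (\<Union>t\<in>{..<d}. {a\<in>A. a ! i = (x + t) mod q})"
    unfolding win_def by auto
  have "card (\<Union>t\<in>{..<d}. {a\<in>A. a ! i = (x + t) mod q}) = (\<Sum>t<d. card {a\<in>A. a ! i = (x + t) mod q})"
    apply (rule card_UN_disjoint)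
    using assms apply auto
    by (metis assms(2) mod_inj_small)
  thus ?thesis using eq by (simp add: cnt_def)
qed

lemma card_fib:
  assumes "finite A" "\<forall>a\<in>A. a ! i < q"
  shows "card A = (\<Sum>y<q. cnt A i y)"
proof -
  have eq: "A = (\<Union>y\<in>{..<q}. {a\<in>A. a ! i = y})" using assms by auto
  have "card (\<Union>y\<in>{..<q}. {a\<in>A. a ! i = y}) = (\<Sum>y<q. card {a\<in>A. a ! i = y})"
    apply (rule card_UN_disjoint) using assms by auto
  thus ?thesis using eq by (simp add: cnt_def)
qed

lemma shift_sum:
  assumes "0 < (q::nat)"
  shows "(\<Sum>x<q. f ((x + t) mod q)) = (\<Sum>x<q. (f x :: nat))"
proof -
  have inj: "inj_on (\<lambda>x. (x + t) mod q) {..<q}"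
  proof
    fix x y assume "x \<in> {..<q}" "y \<in> {..<q}" "(x + t) mod q = (y + t) mod q"
    hence "[x + t = y + t] (mod q)" "x < q" "y < q" by (auto simp: cong_def)
    hence "[x = y] (mod q)" "x < q" "y < q" by (auto simp: cong_add_rcancel_nat)
    thus "x = y" by (simp add: cong_def)
  qed
  have img: "(\<lambda>x. (x + t) mod q) ` {..<q} = {..<q}"
  proof (rule card_subset_eq)
    show "finite {..<q}" by simp
    show "(\<lambda>x. (x + t) mod q) ` {..<q} \<subseteq> {..<q}" using assms by auto
    show "card ((\<lambda>x. (x + t) mod q) ` {..<q}) = card {..<q}" using card_image[OF inj] by simp
  qed
  show ?thesis
    using sum.reindex[OF inj, of f] img by simp
qed

lemma double_count:
  assumes "finite A" "d \<le> q" "0 < q" "\<forall>a\<in>A. a ! i < q"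
  shows "(\<Sum>x<q. card (win A i d q x)) = d * card A"
proof -
  have "(\<Sum>x<q. card (win A i d q x)) = (\<Sum>x<q. \<Sum>t<d. cnt A i ((x + t) mod q))"
    using card_win[OF assms(1,2)] by simp
  also have "\<dots> = (\<Sum>t<d. \<Sum>x<q. cnt A i ((x + t) mod q))" by (rule sum.swap)
  also have "\<dots> = (\<Sum>t<d. \<Sum>x<q. cnt A i x)" using shift_sum[OF assms(3)] by simp
  also have "\<dots> = d * card A" using card_fib[OF assms(1,4)] by simp
  finally show ?thesis .
qed

lemma circ_lemma:
  assumes "d \<le> q" "t < d" "t' < d" "x < q"
  shows "circ_dist q ((x + t) mod q) ((x + t') mod q) < d"
proof -
  have a: "(x + t) mod q = (if x + t < q then x + t else x + t - q)"
    using assms by (simp add: mod_if)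
  have b: "(x + t') mod q = (if x + t' < q then x + t' else x + t' - q)"
    using assms by (simp add: mod_if)
  show ?thesis unfolding circ_dist_def Let_def a b using assms by auto
qed

lemma win_indep:
  assumes "indep_on d q I A" "i \<in> I" "d \<le> q" "x < q"
    and "\<forall>a\<in>A. a ! i < q"
  shows "indep_on d q (I - {i}) (win A i d q x)"
  unfolding indep_on_def
proof (intro ballI impI)
  fix u v assume u: "u \<in> win A i d q x" and v: "v \<in> win A i d q x" and ne: "u \<noteq> v"
  from u obtain t where t: "t < d" "u ! i = (x + t) mod q" "u \<in> A" unfolding win_def by auto
  from v obtain t' where t': "t' < d" "v ! i = (x + t') mod q" "v \<in> A" unfolding win_def by auto
  from assms(1) t(3) t'(3) ne obtain j where j: "j \<in> I" "u ! j \<noteq> v ! j" "\<not> circ_adj d q (u ! j) (v ! j)"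
    unfolding indep_on_def by blast
  have "j \<noteq> i"
  proof
    assume "j = i"
    have "circ_dist q (u ! i) (v ! i) < d" using circ_lemma[OF assms(3) t(1) t'(1) assms(4)] t t' by simp
    thus False using j \<open>j = i\<close> assms(5) t(3) t'(3) unfolding circ_adj_def by auto
  qed
  thus "\<exists>j\<in>I - {i}. u ! j \<noteq> v ! j \<and> \<not> circ_adj d q (u ! j) (v ! j)" using j by auto
qed

lemma indep_empty: "indep_on d q {} A \<Longrightarrow> finite A \<Longrightarrow> card A \<le> 1"
  unfolding indep_on_def by (auto simp: card_le_Suc0_iff_eq)

lemma finite_verts: "finite (strong_pow_verts q n)"
proof -
  have "strong_pow_verts q n \<subseteq> {xs. set xs \<subseteq> {..<q} \<and> length xs = n}"
    unfolding strong_pow_verts_def by (auto simp: in_set_conv_nth)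
  moreover have "finite {xs. set xs \<subseteq> {..<q} \<and> length xs = n}"
    using finite_lists_length_eq[of "{..<q}" n] by simp
  ultimately show ?thesis by (rule finite_subset)
qed

lemma bound:
  assumes g0: "g 0 = 1" and gs: "\<forall>k. g (Suc k) + 1 = r * g k" and gpos: "\<forall>k. g k \<ge> 1"
    and qd: "q + 1 = r * d" and d1: "1 \<le> d" and dq: "d \<le> q"
  shows "\<forall>I A. I \<subseteq> {..<n} \<and> card I = k \<and> finite I \<and> A \<subseteq> strong_pow_verts q n \<and> indep_on d q I A
      \<longrightarrow> card A \<le> g k"
proof (induction k)
  case 0
  show ?case
  proof (intro allI impI)
    fix I A assume h: "I \<subseteq> {..<n} \<and> card I = 0 \<and> finite I \<and> A \<subseteq> strong_pow_verts q n \<and> indep_on d q I A"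
    hence "I = {}" by auto
    moreover have "finite A" using h finite_verts rev_finite_subset by blast
    ultimately show "card A \<le> g 0" using indep_empty[of d q A] h g0 by simp
  qed
next
  case (Suc k)
  show ?case
  proof (intro allI impI)
    fix I A assume h: "I \<subseteq> {..<n} \<and> card I = Suc k \<and> finite I \<and> A \<subseteq> strong_pow_verts q n \<and> indep_on d q I A"
    then obtain i where i: "i \<in> I" by fastforce
    have fA: "finite A" using h finite_verts rev_finite_subset by blast
    have iq: "\<forall>a\<in>A. a ! i < q" using h i unfolding strong_pow_verts_def by auto
    have q0: "0 < q" using d1 dq by simp
    have w: "card (win A i d q x) \<le> g k" if "x < q" for x
    proof -
      have "win A i d q x \<subseteq> A" unfolding win_def by auto
      moreover have "indep_on d q (I - {i}) (win A i d q x)"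
        using win_indep[OF _ i dq that iq] h by blast
      moreover have "card (I - {i}) = k" using h i by auto
      moreover have "I - {i} \<subseteq> {..<n}" "finite (I - {i})" using h by auto
      moreover have "win A i d q x \<subseteq> strong_pow_verts q n" using h \<open>win A i d q x \<subseteq> A\<close> by blast
      ultimately show ?thesis using Suc.IH by blast
    qed
    have "d * card A = (\<Sum>x<q. card (win A i d q x))" using double_count[OF fA dq q0 iq] by simp
    also have "\<dots> \<le> (\<Sum>x<q. g k)" by (rule sum_mono) (use w in auto)
    also have "\<dots> = q * g k" by simp
    finally have le: "d * card A \<le> q * g k" .
    have "d * card A < d * (g (Suc k) + 1)"
    proof -
      have "q < r * d" using qd by linarith
      hence "q * g k < r * d * g k" using gpos[rule_format, of k] by simp
      also have "\<dots> = d * (g (Suc k) + 1)" using gs by (simp add: algebra_simps)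
      finally show ?thesis using le by linarith
    qed
    hence "card A < g (Suc k) + 1" using mult_less_cancel1 by blast
    thus "card A \<le> g (Suc k)" by simp
  qed
qed

fun gq :: "nat \<Rightarrow> nat \<Rightarrow> nat" where
  "gq r 0 = 1"
| "gq r (Suc k) = r * gq r k - 1"

lemma gq_props:
  assumes "r \<ge> 3"
  shows "gq r k \<ge> 1 \<and> int (r - 1) * int (gq r k) = 1 + int r ^ k * int (r - 2)"
proof (induction k)
  case 0
  then show ?case using assms by simp
next
  case (Suc k)
  have g1: "gq r k \<ge> 1" using Suc by simp
  have "r * gq r k \<ge> 3" using assms g1 by (metis mult_le_mono mult.right_neutral)
  hence ge: "gq r (Suc k) \<ge> 1" by simp
  have eqi: "int (gq r (Suc k)) = int r * int (gq r k) - 1"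
  proof -
    have "int (r * gq r k - 1) = int (r * gq r k) - int 1"
      using of_nat_diff[of 1 "r * gq r k"] \<open>r * gq r k \<ge> 3\<close> by linarith
    thus ?thesis by simp
  qed
  have e: "int (r - 1) = int r - 1" "int (r - 2) = int r - 2" using assms by auto
  have IH: "(int r - 1) * int (gq r k) = 1 + int r ^ k * (int r - 2)" using Suc e by simp
  have "(int r - 1) * (int r * int (gq r k) - 1) = int r * ((int r - 1) * int (gq r k)) - int r + 1"
    by (simp add: algebra_simps)
  also have "\<dots> = 1 + int r ^ Suc k * (int r - 2)" unfolding IH by (simp add: algebra_simps)
  finally show ?case using ge eqi e by simp
qed

lemma qseq_gq:
  assumes "r \<ge> 3"
  shows "qseq r k = gq r k"
proof -
  have "int (r - 1) * int (gq r k) = int (1 + r ^ k * (r - 2))" using gq_props[OF assms] by simp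
  hence e: "(r - 1) * gq r k = 1 + r ^ k * (r - 2)" by (simp only: of_nat_mult[symmetric] of_nat_eq_iff)
  have "0 < r - 1" using assms by simp
  hence "((r - 1) * gq r k) div (r - 1) = gq r k" by simp
  hence "(1 + r ^ k * (r - 2)) div (r - 1) = gq r k" using e by (simp only:)
  thus ?thesis unfolding qseq_def .
qed

lemma S_step:
  "(\<Sum>t<d. f ((Suc x + t) mod q)) + f (x mod q) = (\<Sum>t<d. f ((x + t) mod q)) + (f ((x + d) mod q) :: nat)"
proof -
  have "(\<Sum>t<Suc d. f ((x + t) mod q)) = f (x mod q) + (\<Sum>t<d. f ((x + Suc t) mod q))"
    by (subst sum.lessThan_Suc_shift) simp
  moreover have "(\<Sum>t<Suc d. f ((x + t) mod q)) = (\<Sum>t<d. f ((x + t) mod q)) + f ((x + d) mod q)"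
    by simp
  ultimately show ?thesis by simp
qed

theorem proposition9p5:
  fixes r n :: nat and B :: "nat list set"
  assumes "r \<ge> 3" and "n \<ge> 1"
    and "indep_strong_pow (qseq r (n - 1)) (qseq r n) n B"
    and "card B = qseq r n"
  shows "\<forall>i<n. \<forall>s<qseq r n. \<exists>!b. b \<in> B \<and> b ! i = s"
proof (intro allI impI)
  fix i s assume i: "i < n" and s: "s < qseq r n"
  define d where "d = qseq r (n - 1)"
  define q where "q = qseq r n"
  have gp: "\<forall>k. gq r k \<ge> 1" using gq_props[OF assms(1)] by blast
  have gs: "\<forall>k. gq r (Suc k) + 1 = r * gq r k"
  proof
    fix k
    have "r * gq r k \<ge> 1" using gp assms(1) by (simp add: Suc_le_eq)
    thus "gq r (Suc k) + 1 = r * gq r k" by simp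
  qed
  have d1: "1 \<le> d" unfolding d_def qseq_gq[OF assms(1)] using gp by blast
  have qd: "q + 1 = r * d" unfolding d_def q_def qseq_gq[OF assms(1)]
    using gs assms(2) by (cases n) auto
  have "3 * d \<le> r * d" using assms(1) by simp
  hence dq: "d \<le> q" using qd d1 by linarith
  have q0: "0 < q" using d1 dq by simp
  have Bv: "B \<subseteq> strong_pow_verts q n" using assms(3) unfolding indep_strong_pow_def q_def by blast
  have fB: "finite B" using Bv finite_verts rev_finite_subset by blast
  have iq: "\<forall>a\<in>B. a ! i < q" using Bv i unfolding strong_pow_verts_def by auto
  have ind: "indep_on d q {..<n} B"
    using assms(3) unfolding indep_on_def indep_strong_pow_def strong_pow_adj_def d_def q_def by blast
  have bnd: "\<forall>I A. I \<subseteq> {..<n} \<and> card I = n - 1 \<and> finite I \<and> A \<subseteq> strong_pow_verts q n \<and> indep_on d q I A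
      \<longrightarrow> card A \<le> gq r (n - 1)"
    by (rule bound[of "gq r" r q d]) (use gp gs qd d1 dq in auto)
  have gd: "gq r (n - 1) = d" unfolding d_def qseq_gq[OF assms(1)] ..
  have w: "card (win B i d q x) \<le> d" if "x < q" for x
  proof -
    have "win B i d q x \<subseteq> B" unfolding win_def by auto
    moreover have "indep_on d q ({..<n} - {i}) (win B i d q x)"
      using win_indep[OF ind _ dq that iq] i by blast
    moreover have "card ({..<n} - {i}) = n - 1" using i by auto
    moreover have "win B i d q x \<subseteq> strong_pow_verts q n" using Bv \<open>win B i d q x \<subseteq> B\<close> by blast
    moreover have "{..<n} - {i} \<subseteq> {..<n}" "finite ({..<n} - {i})" by auto
    ultimately show ?thesis using bnd gd by metis
  qed
  have sumw: "(\<Sum>x<q. card (win B i d q x)) = d * q"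
    using double_count[OF fB dq q0 iq] assms(4) q_def by simp
  have "(\<Sum>x<q. card (win B i d q x)) + (\<Sum>x<q. d - card (win B i d q x)) = (\<Sum>x<q. d)"
    unfolding sum.distrib[symmetric] by (rule sum.cong) (use w in auto)
  hence "(\<Sum>x<q. d - card (win B i d q x)) = 0" using sumw by simp
  hence weq: "card (win B i d q x) = d" if "x < q" for x
    using w[OF that] that by (simp del: lessThan_iff) (meson lessThan_iff le_antisym)
  define c where "c = cnt B i"
  define S where "S x = (\<Sum>t<d. c ((x + t) mod q))" for x
  have Sd: "S x = d" for x
  proof -
    have "S x = S (x mod q)" unfolding S_def by (simp add: mod_add_left_eq)
    also have "\<dots> = card (win B i d q (x mod q))" unfolding S_def c_def using card_win[OF fB dq] by simp
    also have "\<dots> = d" using weq q0 by simp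
    finally show ?thesis .
  qed
  have cd: "c (x mod q) = c ((x + d) mod q)" for x
    using S_step[where d=d and f=c and x=x and q=q] Sd[of "Suc x"] Sd[of x] unfolding S_def by linarith
  have cm: "c (x mod q) = c ((x + m * d) mod q)" for x m
  proof (induction m)
    case 0 show ?case by simp
  next
    case (Suc m)
    have "c ((x + m * d) mod q) = c (((x + m * d) + d) mod q)" by (rule cd)
    moreover have "(x + m * d) + d = x + Suc m * d" by simp
    ultimately show ?case using Suc.IH by simp
  qed
  have c1: "c (x mod q) = c (Suc x mod q)" for x
  proof -
    have "x + r * d = Suc x + q" using qd by simp
    hence "(x + r * d) mod q = (Suc x + q) mod q" by simp
    moreover have "(Suc x + q) mod q = Suc x mod q" by (rule mod_add_self2)
    ultimately have "(x + r * d) mod q = Suc x mod q" by simp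
    thus ?thesis using cm[of x r] by simp
  qed
  have call: "c (y mod q) = c 0" for y
  proof (induction y)
    case 0 show ?case by simp
  next
    case (Suc y) show ?case using Suc.IH c1[of y] by simp
  qed
  have "card B = (\<Sum>y<q. c y)" unfolding c_def using card_fib[OF fB iq] .
  also have "\<dots> = (\<Sum>y<q. c 0)" by (rule sum.cong) (use call in \<open>auto simp del: mod_less\<close>, metis call mod_less)
  finally have "q = q * c 0" using assms(4) q_def by simp
  hence c0: "c 0 = 1" using q0 by simp
  have "c s = 1" using call[of s] c0 s q_def by (metis mod_less)
  hence "card {b\<in>B. b ! i = s} = 1" unfolding c_def cnt_def .
  then obtain b where "{b\<in>B. b ! i = s} = {b}" by (rule card_1_singletonE)
  thus "\<exists>!b. b \<in> B \<and> b ! i = s" by (metis (mono_tags, lifting) mem_Collect_eq singletonD singletonI)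
qed

end
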